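(* Let $\beta_{(j_1,\ldots,j_s)}(m_1,\ldots,m_r)$ be the integers defined below. For every $r\ge 2$, all integers $m_1,\ldots,m_r\ge2$, every $1\le s\le r-1$ and every $1\le j_1<\cdots<j_s\le r$, $$\beta_{(j_1,\ldots,j_s)}(m_1,\ldots,m_r)\equiv 0\pmod{\prod_{\substack{1\le t\le r\\ t\notin\{j_1,\ldots,j_s\}}}\mu(m_t,t)}.$$ Moreover, if $m_1=m_2=\cdots=m_r=m$, then $\beta_{(j_1,\ldots,j_s)}(m_1,\ldots,m_r)\equiv 0\pmod{m^{r-s}/\gcd(m,2)}$.
   Context: For positive integers $a,b$, $\mu(a,b):=a/\gcd(a,b)$. For integers $m\ge2$, $r\ge1$, the numbers $\alpha_{m,r}(1),\ldots,\alpha_{m,r}(r)$ are the unique integers with $\binom{mn+r-1}{r}=\sum_{i=1}^{r}\alpha_{m,r}(i)\binom{n+i-1}{i}$ for all positive integers $n$. The integers $\beta_{(j_1,\ldots,j_s)}(m_1,\ldots,m_r)$, for $r\ge2$, $m_1,\ldots,m_r\ge2$, $1\le s\le r-1$, $1\le j_1<\cdots<j_s\le r$, are defined recursively in $r$ as follows, where $C_{r,i}:=\prod_{j=1}^{r-i-1}m_j^{\,j}\prod_{j=r-i}^{r-1}m_j^{\,r-i-1}$, empty sums are $0$, empty products are $1$, and any $\beta$ having a nonpositive entry in its index tuple is $0$: (i) if $j_s=r$: for $s\ge2$, $\beta_{(j_1,\ldots,j_{s-1},r)}(m_1,\ldots,m_r)=\beta_{(j_1,\ldots,j_{s-1})}(m_1,\ldots,m_{r-1})$,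 and $\beta_{(r)}(m_1,\ldots,m_r)=0$; (ii) if $(j_1,\ldots,j_s)=(r-s,\ldots,r-1)$: $\beta_{(r-s,\ldots,r-1)}(m_1,\ldots,m_r)=-\big[C_{r,s}\alpha_{m_r,r}(s)+\sum_{i=s+1}^{r-1}C_{r,i}\alpha_{m_r,r}(i)\beta_{(i-s+1,\ldots,i)}(m_{r-i},\ldots,m_{r-1})\big]$; (iii) otherwise: $\beta_{(j_1,\ldots,j_s)}(m_1,\ldots,m_r)=-\sum_{i=s+1}^{r-1}C_{r,i}\alpha_{m_r,r}(i)\beta_{(j_1-(r-i)+1,\ldots,j_s-(r-i)+1)}(m_{r-i},\ldots,m_{r-1})$. (With $h_r=q/(1-q)^{r+1}$, $H_\emptyset=q/(1-q)$, $H_{(m_1,\ldots,m_r)}=U_{m_r}\big(\tfrac{1}{1-q}H_{(m_1,\ldots,m_{r-1})}\big)$, $U_m(\sum a(n)q^n)=\sum a(mn)q^n$, these are coefficients for which $H_{(m_1,\ldots,m_r)}=m_1m_2^2\cdots m_r^rh_r-\sum_{s,\,j_1<\cdots<j_s}\beta_{(j_1,\ldots,j_s)}(m_1,\ldots,m_r)H_{(m_{j_1},\ldots,m_{j_s})}$.) *)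

theory Defs
  imports Main
begin

definition mu :: "nat \<Rightarrow> nat \<Rightarrow> nat" where
  "mu a b = a div gcd a b"

definition alpha :: "nat \<Rightarrow> nat \<Rightarrow> nat \<Rightarrow> int" where
  "alpha m r = (THE f :: nat \<Rightarrow> int. (\<forall>i. i \<notin> {1..r} \<longrightarrow> f i = 0) \<and>
      (\<forall>n::nat. n \<ge> 1 \<longrightarrow>
         int ((m * n + r - 1) choose r) = (\<Sum>i=1..r. f i * int ((n + i - 1) choose i))))"

text \<open>C_{r,i} for ms = [m_1,...,m_r] (m_j = ms!(j-1)).\<close>
definition Ccoef :: "nat list \<Rightarrow> nat \<Rightarrow> int" where
  "Ccoef ms i = (let r = length ms in
     (\<Prod>j\<in>{1..r-i-1}. int (ms!(j-1)) ^ j) * (\<Prod>j\<in>{r-i..r-1}. int (ms!(j-1)) ^ (r-i-1)))"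

text \<open>The sublist (m_{r-i},...,m_{r-1}) is take i (drop (r-i-1) ms).
  Values outside the domain of the paper's definition (s = 0, s >= r) are set to 0.\<close>
function beta :: "int list \<Rightarrow> nat list \<Rightarrow> int" where
  "beta js ms = (let r = length ms; s = length js in
     if (\<exists>j\<in>set js. j \<le> 0) \<or> js = [] \<or> r = 0 \<or> s \<ge> r then 0
     else if last js = int r then (if s = 1 then 0 else beta (butlast js) (butlast ms))
     else if js = map (\<lambda>k. int (r - s + k)) [0..<s] then
       - (Ccoef ms s * alpha (last ms) r s +
          (\<Sum>i\<in>{s+1..r-1}. Ccoef ms i * alpha (last ms) r i *
              beta (map (\<lambda>k. int (i - s + 1 + k)) [0..<s]) (take i (drop (r-i-1) ms))))
     else
       - (\<Sum>i\<in>{s+1..r-1}. Ccoef ms i * alpha (last ms) r i *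
              beta (map (\<lambda>j. j - int (r - i) + 1) js) (take i (drop (r-i-1) ms))))"
  by pat_completeness auto
termination
  by (relation "measure (\<lambda>(js, ms). length ms)") auto

end

theory Submission
  imports Defs
begin


definition S :: "nat \<Rightarrow> nat \<Rightarrow> nat \<Rightarrow> int" where
  "S m i j = (\<Sum>k\<le>i. (-1)^k * int (i choose k) * int (m*k choose j))"

lemma S_ext:
  assumes "i \<le> N"
  shows "S m i j = (\<Sum>k\<le>N. (-1)^k * int (i choose k) * int (m*k choose j))"
  unfolding S_def
  by (rule sum.mono_neutral_left) (use assms in auto)

lemma choose_step_int:
  "int (Suc j) * int (n choose Suc j) = (int n - int j) * int (n choose j)"
proof (cases "j \<le> n")
  case True
  have "Suc j * (n choose Suc j) = (n - j) * (n choose j)"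
    using times_binomial_minus1_eq[of "Suc j" n] binomial_absorb_comp[of n j] by simp
  then have "int (Suc j * (n choose Suc j)) = int ((n - j) * (n choose j))" by simp
  then show ?thesis using True by (simp add: of_nat_diff algebra_simps)
next
  case False
  then have "n choose j = 0" "n choose Suc j = 0" by (auto simp: binomial_eq_0)
  then show ?thesis by (simp only: of_nat_0 mult_0_right)
qed

lemma S_0: "S m 0 j = (if j = 0 then 1 else 0)"
  by (simp add: S_def)

lemma S_rec:
  "int (Suc j) * S m (Suc i) (Suc j)
     = int m * int (Suc i) * (S m (Suc i) j - S m i j) - int j * S m (Suc i) j"
proof -
  define X where "X k = int (m*k choose j)" for k
  have A: "int (Suc j) * S m (Suc i) (Suc j)
      = (\<Sum>k\<le>Suc i. (-1)^k * int (Suc i choose k) * ((int (m*k) - int j) * X k))"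
    unfolding S_def sum_distrib_left
  proof (rule sum.cong)
    fix k assume "k \<in> {..Suc i}"
    have h: "int (Suc j) * int (m*k choose Suc j) = (int (m*k) - int j) * X k"
      using choose_step_int[of j "m*k"] by (simp add: X_def)
    have "int (Suc j) * ((-1)^k * int (Suc i choose k) * int (m*k choose Suc j))
        = (-1)^k * int (Suc i choose k) * (int (Suc j) * int (m*k choose Suc j))"
      by (simp only: mult_ac)
    also have "\<dots> = (-1)^k * int (Suc i choose k) * ((int (m*k) - int j) * X k)"
      by (simp only: h)
    finally show "int (Suc j) * ((-1)^k * int (Suc i choose k) * int (m*k choose Suc j))
        = (-1)^k * int (Suc i choose k) * ((int (m*k) - int j) * X k)" .
  qed simp
  also have "\<dots> = int m * (\<Sum>k\<le>Suc i. (-1)^k * int k * int (Suc i choose k) * X k)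
       - int j * S m (Suc i) j"
    unfolding S_def X_def sum_distrib_left sum_subtractf[symmetric]
    by (rule sum.cong) (auto simp: algebra_simps)
  also have "(\<Sum>k\<le>Suc i. (-1)^k * int k * int (Suc i choose k) * X k)
      = int (Suc i) * (\<Sum>k\<le>i. (-1)^(Suc k) * int (i choose k) * X (Suc k))"
  proof -
    have "(\<Sum>k\<le>Suc i. (-1)^k * int k * int (Suc i choose k) * X k)
        = (\<Sum>k\<le>i. (-1)^(Suc k) * int (Suc k) * int (Suc i choose Suc k) * X (Suc k))"
      by (subst sum.atMost_Suc_shift) simp
    also have "\<dots> = (\<Sum>k\<le>i. int (Suc i) * ((-1)^(Suc k) * int (i choose k) * X (Suc k)))"
    proof (rule sum.cong)
      fix k assume "k \<in> {..i}"
      have "int (Suc k) * int (Suc i choose Suc k) = int (Suc i) * int (i choose k)"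
        using Suc_times_binomial[of k i] by (metis of_nat_mult)
      then show "(-1)^(Suc k) * int (Suc k) * int (Suc i choose Suc k) * X (Suc k)
          = int (Suc i) * ((-1)^(Suc k) * int (i choose k) * X (Suc k))"
        by (metis (no_types, lifting) mult.assoc mult.left_commute)
    qed simp
    finally show ?thesis by (simp add: sum_distrib_left)
  qed
  also have "(\<Sum>k\<le>i. (-1)^(Suc k) * int (i choose k) * X (Suc k)) = S m (Suc i) j - S m i j"
  proof -
    have e1: "S m (Suc i) j = X 0 + (\<Sum>k\<le>i. (-1)^(Suc k) * int (i choose k) * X (Suc k))
           + (\<Sum>k\<le>i. (-1)^(Suc k) * int (i choose Suc k) * X (Suc k))"
      unfolding S_def X_def
      by (subst sum.atMost_Suc_shift) (simp add: sum.distrib[symmetric] algebra_simps)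
    have e2: "S m i j = X 0 + (\<Sum>k\<le>i. (-1)^(Suc k) * int (i choose Suc k) * X (Suc k))"
      unfolding S_ext[of i "Suc i", OF le_SucI[OF order_refl]] X_def
      by (subst sum.atMost_Suc_shift) simp
    show ?thesis using e1 e2 by simp
  qed
  finally show ?thesis by (simp add: algebra_simps)
qed

definition fr :: "nat \<Rightarrow> nat \<Rightarrow> nat \<Rightarrow> int" where
  "fr m r i = (-1)^r * S m i r"

lemma fr_rec:
  "int (Suc j) * fr m (Suc j) (Suc i)
     = int m * int (Suc i) * fr m j i + (int j - int m * int (Suc i)) * fr m j (Suc i)"
proof -
  have "int (Suc j) * fr m (Suc j) (Suc i) = - ((-1)^j * (int (Suc j) * S m (Suc i) (Suc j)))"
    by (simp add: fr_def)
  also have "\<dots> = - ((-1)^j * (int m * int (Suc i) * (S m (Suc i) j - S m i j) - int j * S m (Suc i) j))"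
    by (simp only: S_rec)
  finally show ?thesis by (simp add: fr_def algebra_simps)
qed

lemma fr_0: "fr m (Suc j) 0 = 0"
  by (simp add: fr_def S_0)

lemma S_vanish: "j < i \<Longrightarrow> S m i j = 0"
proof (induction j arbitrary: i)
  case 0
  then show ?case
    using choose_alternating_sum[of i, where 'a=int] by (simp add: S_def)
next
  case (Suc j)
  then obtain i' where i: "i = Suc i'" and "j < i'" by (cases i) auto
  then have "S m (Suc i') j = 0" "S m i' j = 0" using Suc.IH by auto
  then have "int (Suc j) * S m (Suc i') (Suc j) = 0" by (simp only: S_rec) simp
  then show ?case using i by simp
qed

lemma fr_vanish: "r < i \<Longrightarrow> fr m r i = 0"
  by (simp add: fr_def S_vanish)

lemma fr_top: "fr m r r = int m ^ r"
proof (induction r)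
  case 0
  then show ?case by (simp add: fr_def S_0)
next
  case (Suc r)
  have "int (Suc r) * fr m (Suc r) (Suc r) = int (Suc r) * (int m * fr m r r)"
    using fr_rec[of r m r] fr_vanish[of r "Suc r" m] by (simp add: algebra_simps)
  then have "fr m (Suc r) (Suc r) = int m * fr m r r" by simp
  then show ?case using Suc.IH by simp
qed

lemma fr_sub: "2 * fr m (Suc r) r = - (int m ^ r * (int m - 1) * int r)"
proof (induction r)
  case 0
  then show ?case by (simp add: fr_0)
next
  case (Suc r)
  have "int (Suc (Suc r)) * (2 * fr m (Suc (Suc r)) (Suc r))
     = int m * int (Suc r) * (2 * fr m (Suc r) r) + 2 * (int (Suc r) - int m * int (Suc r)) * fr m (Suc r) (Suc r)"
    using fr_rec[of "Suc r" m r] by (simp add: algebra_simps)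
  also have "\<dots> = int (Suc (Suc r)) * (- (int m ^ Suc r * (int m - 1) * int (Suc r)))"
    unfolding Suc.IH fr_top by (simp add: algebra_simps)
  finally have "int (Suc (Suc r)) * (2 * fr m (Suc (Suc r)) (Suc r))
     = int (Suc (Suc r)) * (- (int m ^ Suc r * (int m - 1) * int (Suc r)))" .
  then show ?case by (rule mult_left_cancel[THEN iffD1, rotated]) simp
qed

definition Bf :: "nat \<Rightarrow> nat \<Rightarrow> int" where
  "Bf n i = int ((n + i - 1) choose i)"

lemma nB: "1 \<le> n \<Longrightarrow> int n * Bf n i = int (Suc i) * Bf n (Suc i) - int i * Bf n i"
proof -
  assume n: "1 \<le> n"
  have "Suc i * (Suc (n+i-1) choose Suc i) = Suc (n+i-1) * (n+i-1 choose i)"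
    by (rule Suc_times_binomial)
  moreover have "Suc (n+i-1) = n + i" "n + Suc i - 1 = n + i" using n by auto
  ultimately have "int (Suc i) * Bf n (Suc i) = int (n + i) * Bf n i"
    unfolding Bf_def by (metis of_nat_mult)
  then show ?thesis by (simp add: algebra_simps)
qed

lemma exist_id:
  assumes n: "1 \<le> n"
  shows "(\<Sum>i=1..Suc r. fr m (Suc r) i * Bf n i) = int ((m*n + Suc r - 1) choose Suc r)"
proof (induction r)
  case 0
  then show ?case using fr_top[of m 1] by (simp add: Bf_def)
next
  case (Suc r)
  define R where "R = Suc r"
  define g where "g = fr m R"
  have IH: "(\<Sum>i=1..R. g i * Bf n i) = int ((m*n + R - 1) choose R)"
    using Suc.IH by (simp add: R_def g_def)
  have g0: "g 0 = 0" by (simp add: g_def R_def fr_0)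
  have gR: "g (Suc R) = 0" by (simp add: g_def fr_vanish)
  have "int (Suc R) * (\<Sum>i=1..Suc R. fr m (Suc R) i * Bf n i)
      = (\<Sum>i=0..R. int (Suc R) * fr m (Suc R) (Suc i) * Bf n (Suc i))"
    by (subst sum.shift_bounds_cl_Suc_ivl[symmetric]) (simp add: sum_distrib_left distrib_left mult.assoc)
  also have "\<dots> = (\<Sum>i=0..R. int m * int (Suc i) * g i * Bf n (Suc i))
      + (\<Sum>i=0..R. (int R - int m * int (Suc i)) * g (Suc i) * Bf n (Suc i))"
    unfolding sum.distrib[symmetric] g_def fr_rec by (simp add: algebra_simps)
  also have "(\<Sum>i=0..R. int m * int (Suc i) * g i * Bf n (Suc i))
      = (\<Sum>i=1..R. int m * int (Suc i) * g i * Bf n (Suc i))"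
    by (subst sum.atLeast_Suc_atMost) (simp_all add: g0)
  also have "(\<Sum>i=0..R. (int R - int m * int (Suc i)) * g (Suc i) * Bf n (Suc i))
      = (\<Sum>i=1..Suc R. (int R - int m * int i) * g i * Bf n i)"
    using sum.shift_bounds_cl_Suc_ivl[of "\<lambda>i. (int R - int m * int i) * g i * Bf n i" 0 R]
    by simp
  also have "\<dots> = (\<Sum>i=1..R. (int R - int m * int i) * g i * Bf n i)"
    by (simp add: gR)
  also have "(\<Sum>i=1..R. int m * int (Suc i) * g i * Bf n (Suc i))
      + (\<Sum>i=1..R. (int R - int m * int i) * g i * Bf n i)
      = (\<Sum>i=1..R. g i * (int m * (int n * Bf n i) + int R * Bf n i))"
    unfolding sum.distrib[symmetric] nB[OF n] by (rule sum.cong) (simp_all add: algebra_simps)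
  also have "\<dots> = int (m*n + R) * (\<Sum>i=1..R. g i * Bf n i)"
    by (simp add: sum_distrib_left algebra_simps)
  also have "\<dots> = int (m*n + R) * int ((m*n + R - 1) choose R)" by (simp only: IH)
  also have "\<dots> = int (Suc R) * int ((m*n + Suc R - 1) choose Suc R)"
  proof -
    have "Suc R * (Suc (m*n+R-1) choose Suc R) = Suc (m*n+R-1) * (m*n+R-1 choose R)"
      by (rule Suc_times_binomial)
    moreover have "Suc (m*n+R-1) = m*n + R" "m*n + Suc R - 1 = m*n+R" by (auto simp: R_def)
    ultimately show ?thesis by (metis of_nat_mult)
  qed
  finally show ?case unfolding R_def by (subst (asm) mult_left_cancel) simp_all
qed

lemma Bf_diff: "Bf (Suc n) (Suc k) - Bf n (Suc k) = (if k = 0 then 1 else Bf (Suc n) k)"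
proof -
  have "Suc n + Suc k - 1 = Suc (n + k)" "n + Suc k - 1 = n + k" by auto
  then have "Bf (Suc n) (Suc k) = Bf n (Suc k) + int (n + k choose k)"
    unfolding Bf_def by simp
  then show ?thesis by (auto simp: Bf_def)
qed

lemma uniq_aux:
  "\<forall>N d. (\<forall>n\<ge>N. (\<Sum>i=1..r. d i * Bf (Suc n) i) = (\<Sum>i=1..r. d i * Bf n i))
     \<longrightarrow> (\<forall>i\<in>{1..r}. d i = (0::int))"
proof (induction r)
  case 0
  then show ?case by simp
next
  case (Suc r)
  show ?case
  proof (intro allI impI)
    fix N and d :: "nat \<Rightarrow> int"
    assume H: "\<forall>n\<ge>N. (\<Sum>i=1..Suc r. d i * Bf (Suc n) i) = (\<Sum>i=1..Suc r. d i * Bf n i)"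
    have E: "d 1 + (\<Sum>k=1..r. d (Suc k) * Bf (Suc n) k) = 0" if "n \<ge> N" for n
    proof -
      have "0 = (\<Sum>i=1..Suc r. d i * Bf (Suc n) i) - (\<Sum>i=1..Suc r. d i * Bf n i)"
        using H that by simp
      also have "\<dots> = (\<Sum>i=1..Suc r. d i * (Bf (Suc n) i - Bf n i))"
        by (simp add: sum_subtractf algebra_simps)
      also have "\<dots> = (\<Sum>k=0..r. d (Suc k) * (Bf (Suc n) (Suc k) - Bf n (Suc k)))"
        using sum.shift_bounds_cl_Suc_ivl[of "\<lambda>i. d i * (Bf (Suc n) i - Bf n i)" 0 r]
        by simp
      also have "\<dots> = d 1 + (\<Sum>k=1..r. d (Suc k) * Bf (Suc n) k)"
        by (subst sum.atLeast_Suc_atMost) (simp_all add: Bf_diff)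
      finally show ?thesis by simp
    qed
    have "\<forall>i\<in>{1..r}. d (Suc i) = 0"
      using Suc.IH
    proof (elim allE[of _ "Suc N"] allE[of _ "\<lambda>k. d (Suc k)"] impE)
      show "\<forall>n\<ge>Suc N. (\<Sum>i=1..r. d (Suc i) * Bf (Suc n) i) = (\<Sum>i=1..r. d (Suc i) * Bf n i)"
      proof (intro allI impI)
        fix n assume "Suc N \<le> n"
        then obtain n' where n': "n = Suc n'" "N \<le> n'" by (cases n) auto
        show "(\<Sum>i=1..r. d (Suc i) * Bf (Suc n) i) = (\<Sum>i=1..r. d (Suc i) * Bf n i)"
          using E[of n] E[of n'] n' by simp
      qed
    qed
    moreover have "d 1 = 0"
      using E[of N] calculation by simp
    ultimately show "\<forall>i\<in>{1..Suc r}. d i = 0"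
    proof (intro ballI)
      fix i assume i: "i \<in> {1..Suc r}"
      show "d i = 0"
      proof (cases "i = 1")
        case True then show ?thesis using \<open>d 1 = 0\<close> by simp
      next
        case False
        then obtain k where "i = Suc k" "k \<in> {1..r}" using i by (cases i) auto
        then show ?thesis using \<open>\<forall>i\<in>{1..r}. d (Suc i) = 0\<close> by simp
      qed
    qed
  qed
qed

definition cand :: "nat \<Rightarrow> nat \<Rightarrow> nat \<Rightarrow> int" where
  "cand m r i = (if i \<in> {1..r} then fr m r i else 0)"

lemma alpha_eq:
  assumes r: "1 \<le> r"
  shows "alpha m r = cand m r"
  unfolding alpha_def
proof (rule the1_equality)
  let ?P = "\<lambda>f::nat\<Rightarrow>int. (\<forall>i. i \<notin> {1..r} \<longrightarrow> f i = 0) \<and>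
      (\<forall>n::nat. n \<ge> 1 \<longrightarrow>
         int ((m * n + r - 1) choose r) = (\<Sum>i=1..r. f i * int ((n + i - 1) choose i)))"
  obtain r' where r': "r = Suc r'" using r by (cases r) auto
  have Pc: "?P (cand m r)"
  proof (intro conjI allI impI)
    fix i assume "i \<notin> {1..r}" then show "cand m r i = 0" unfolding cand_def by auto
  next
    fix n :: nat assume "1 \<le> n"
    from exist_id[OF this, where r=r' and m=m]
    have "(\<Sum>i=1..r. fr m r i * Bf n i) = int ((m*n + r - 1) choose r)" using r' by simp
    moreover have "(\<Sum>i=1..r. fr m r i * Bf n i) = (\<Sum>i=1..r. cand m r i * int ((n + i - 1) choose i))"
      by (rule sum.cong) (auto simp: cand_def Bf_def)
    ultimately show "int ((m * n + r - 1) choose r) = (\<Sum>i=1..r. cand m r i * int ((n + i - 1) choose i))"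
      by simp
  qed
  show "\<exists>!f. ?P f"
  proof (rule ex1I[of _ "cand m r"])
    show "?P (cand m r)" by (rule Pc)
  next
    fix g assume Pg: "?P g"
    define d where "d i = g i - cand m r i" for i
    have Z: "(\<Sum>i=1..r. d i * Bf n i) = 0" if "n \<ge> 1" for n
    proof -
      have "(\<Sum>i=1..r. d i * Bf n i) = (\<Sum>i=1..r. g i * int ((n + i - 1) choose i))
           - (\<Sum>i=1..r. cand m r i * int ((n + i - 1) choose i))"
        by (simp add: d_def Bf_def sum_subtractf algebra_simps)
      moreover have "int ((m * n + r - 1) choose r) = (\<Sum>i=1..r. g i * int ((n + i - 1) choose i))"
        using Pg that by blast
      moreover have "int ((m * n + r - 1) choose r) = (\<Sum>i=1..r. cand m r i * int ((n + i - 1) choose i))"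
        using Pc that by blast
      ultimately show ?thesis by linarith
    qed
    have "\<forall>i\<in>{1..r}. d i = 0"
      using uniq_aux[of r] 
    proof (elim allE[of _ 1] allE[of _ d] impE)
      show "\<forall>n\<ge>1. (\<Sum>i=1..r. d i * Bf (Suc n) i) = (\<Sum>i=1..r. d i * Bf n i)"
      proof (intro allI impI)
        fix n :: nat assume "1 \<le> n"
        then show "(\<Sum>i=1..r. d i * Bf (Suc n) i) = (\<Sum>i=1..r. d i * Bf n i)"
          using Z[of n] Z[of "Suc n"] by simp
      qed
    qed
    show "g = cand m r"
    proof
      fix i
      show "g i = cand m r i"
      proof (cases "i \<in> {1..r}")
        case True
        then show ?thesis using \<open>\<forall>i\<in>{1..r}. d i = 0\<close> by (simp add: d_def)
      next
        case False
        then show ?thesis using Pg unfolding cand_def by auto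
      qed
    qed
  qed
  show "?P (cand m r)" by (rule Pc)
qed

lemma mu_dvd_choose:
  assumes r: "1 \<le> r"
  shows "mu m r dvd (m*k choose r)"
proof -
  define g where "g = gcd m r"
  have g0: "g \<noteq> 0" using r by (simp add: g_def)
  have "r * (m*k choose r) = m*k * ((m*k - 1) choose (r - 1))"
    using times_binomial_minus1_eq[of r "m*k"] r by simp
  then have "m dvd r * (m*k choose r)" by (metis dvd_mult2 dvd_triv_left)
  moreover have "m = g * (m div g)" "r = g * (r div g)" by (simp_all add: g_def)
  ultimately have "g * (m div g) dvd g * ((r div g) * (m*k choose r))"
    by (metis mult.assoc)
  then have "(m div g) dvd (r div g) * (m*k choose r)" using g0 by simp
  moreover have "coprime (m div g) (r div g)" unfolding g_def
    by (rule div_gcd_coprime) (use r in simp)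
  ultimately have "(m div g) dvd (m*k choose r)"
    using coprime_dvd_mult_right_iff by blast
  then show ?thesis by (simp add: mu_def g_def)
qed

lemma alpha_mu:
  assumes r: "1 \<le> r"
  shows "int (mu m r) dvd alpha m r i"
proof -
  have "int (mu m r) dvd S m i r"
    unfolding S_def
    by (rule dvd_sum) (use mu_dvd_choose[OF r] in \<open>auto intro: dvd_mult\<close>)
  then show ?thesis
    unfolding alpha_eq[OF r] cand_def fr_def by auto
qed

lemma alpha_sub2: "2 * alpha m (Suc (Suc k)) (Suc k) = - (int m ^ Suc k * (int m - 1) * int (Suc k))"
proof -
  have "alpha m (Suc (Suc k)) = cand m (Suc (Suc k))" by (rule alpha_eq) simp
  then show ?thesis unfolding cand_def using fr_sub[of m "Suc k"] by simp
qed

lemma alpha_sub_dvd: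
  assumes "3 \<le> r"
  shows "int m dvd alpha m r (r - 1)"
proof -
  define k where "k = r - 3"
  have k: "r = Suc (Suc (Suc k))" using assms by (simp add: k_def)
  define f where "f = alpha m r (r - 1)"
  have f: "2 * f = - (int m * int m * (int m ^ k * (int m - 1) * int (Suc (Suc k))))"
    using alpha_sub2[of m "Suc k"] by (simp add: f_def k algebra_simps)
  show ?thesis
  proof (cases "even m")
    case True
    then obtain a where a: "m = 2 * a" by auto
    have "f = - (int m * (int a * (int m ^ k * (int m - 1) * int (Suc (Suc k)))))"
      using f unfolding a by (simp add: algebra_simps)
    then show ?thesis by (simp add: f_def)
  next
    case False
    have "int m dvd 2 * f" using f by simp
    moreover have "coprime (int m) 2" using False by simp
    ultimately show ?thesis unfolding f_def using coprime_dvd_mult_right_iff by blast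
  qed
qed

lemma alpha_21: "int (m div gcd m 2) dvd alpha m 2 1"
proof -
  define f where "f = alpha m 2 1"
  have f: "2 * f = - (int m * (int m - 1))"
    using alpha_sub2[of m 0] by (simp add: f_def numeral_2_eq_2)
  show ?thesis
  proof (cases "even m")
    case True
    then obtain a where a: "m = 2 * a" by auto
    have "f = - (int a * (int m - 1))"
      using f unfolding a by (simp add: algebra_simps)
    moreover have "m div gcd m 2 = a" using a by simp
    ultimately show ?thesis by (simp add: f_def)
  next
    case False
    have "int m dvd 2 * f" using f by simp
    moreover have "coprime (int m) 2" using False by simp
    ultimately have "int m dvd f" using coprime_dvd_mult_right_iff by blast
    moreover have "gcd m 2 = 1" using False by (simp add: coprime_iff_gcd_eq_1[symmetric])
    ultimately show ?thesis by (simp add: f_def)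
  qed
qed



declare beta.simps[simp del]

abbreviation Zc :: "int list \<Rightarrow> nat list \<Rightarrow> bool" where
  "Zc js ms \<equiv> (\<exists>j\<in>set js. j \<le> 0) \<or> js = [] \<or> length ms = 0 \<or> length js \<ge> length ms"

lemma beta_zero: "Zc js ms \<Longrightarrow> beta js ms = 0"
  by (subst beta.simps) (simp add: Let_def)

lemma beta_last: "\<not> Zc js ms \<Longrightarrow> last js = int (length ms) \<Longrightarrow>
   beta js ms = (if length js = 1 then 0 else beta (butlast js) (butlast ms))"
  by (subst beta.simps) (simp add: Let_def)

lemma beta_top: "\<not> Zc js ms \<Longrightarrow> last js \<noteq> int (length ms) \<Longrightarrow>
   js = map (\<lambda>k. int (length ms - length js + k)) [0..<length js] \<Longrightarrow>
   beta js ms = - (Ccoef ms (length js) * alpha (last ms) (length ms) (length js) +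
          (\<Sum>i\<in>{length js+1..length ms-1}. Ccoef ms i * alpha (last ms) (length ms) i *
              beta (map (\<lambda>k. int (i - length js + 1 + k)) [0..<length js]) (take i (drop (length ms-i-1) ms))))"
  by (subst beta.simps) (simp add: Let_def)

lemma beta_mid: "\<not> Zc js ms \<Longrightarrow> last js \<noteq> int (length ms) \<Longrightarrow>
   js \<noteq> map (\<lambda>k. int (length ms - length js + k)) [0..<length js] \<Longrightarrow>
   beta js ms = - (\<Sum>i\<in>{length js+1..length ms-1}. Ccoef ms i * alpha (last ms) (length ms) i *
              beta (map (\<lambda>j. j - int (length ms - i) + 1) js) (take i (drop (length ms-i-1) ms)))"
  by (subst beta.simps) (simp add: Let_def)

definition D :: "int list \<Rightarrow> nat list \<Rightarrow> nat" where
  "D js ms = (\<Prod>t\<in>{t\<in>{1..length ms}. int t \<notin> set js}. mu (ms!(t-1)) t)"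

lemma mu_dvd_self: "mu m t dvd m"
proof -
  have "m = (m div gcd m t) * gcd m t" by simp
  then show ?thesis unfolding mu_def by (metis dvd_triv_left)
qed

lemma mu_dvd_shift: "mu m t dvd m ^ k * mu m (t - k)"
proof (cases k)
  case 0 then show ?thesis by simp
next
  case (Suc k')
  have "m dvd m ^ k" using Suc by simp
  then show ?thesis using mu_dvd_self by (meson dvd_mult2 dvd_trans)
qed

lemma core:
  fixes ms :: "nat list" and js :: "int list" and i :: nat
  defines "r \<equiv> length ms"
  defines "k \<equiv> length ms - i - 1"
  assumes i: "i < r" and J: "\<forall>j\<in>set js. int (r - i) \<le> j \<and> j \<le> int r - 1"
  shows "D js ms dvd (\<Prod>j\<in>{1..k}. ms!(j-1)^j) * (\<Prod>j\<in>{r-i..r-1}. ms!(j-1)^k)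
     * (\<Prod>t\<in>{t\<in>{r-i..r-1}. int t \<notin> set js}. mu (ms!(t-1)) (t-k)) * mu (ms!(r-1)) r"
proof -
  define A2 where "A2 = {t\<in>{r-i..r-1}. int t \<notin> set js}"
  have rk: "r - i = k + 1" using i by (simp add: k_def r_def)
  have A: "{t\<in>{1..length ms}. int t \<notin> set js} = ({1..k} \<union> A2) \<union> {r}"
  proof (rule set_eqI, rule iffI)
    fix t assume t: "t \<in> {t\<in>{1..length ms}. int t \<notin> set js}"
    show "t \<in> ({1..k} \<union> A2) \<union> {r}"
      using t rk unfolding A2_def r_def by auto
  next
    fix t assume t: "t \<in> ({1..k} \<union> A2) \<union> {r}"
    have "int t \<notin> set js" if "t \<le> k"
      using J that rk by force
    moreover have "int r \<notin> set js" using J by force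
    ultimately show "t \<in> {t\<in>{1..length ms}. int t \<notin> set js}"
      using t rk i unfolding A2_def r_def by auto
  qed
  have fin: "finite A2" by (simp add: A2_def)
  have disj1: "{1..k} \<inter> A2 = {}" using rk by (auto simp: A2_def)
  have disj2: "({1..k} \<union> A2) \<inter> {r} = {}" using rk i by (auto simp: A2_def)
  have "D js ms = (\<Prod>t\<in>{1..k}. mu (ms!(t-1)) t) * (\<Prod>t\<in>A2. mu (ms!(t-1)) t) * mu (ms!(r-1)) r"
  proof -
    define f where "f t = mu (ms!(t-1)) t" for t
    have "prod f (({1..k} \<union> A2) \<union> {r}) = prod f ({1..k} \<union> A2) * prod f {r}"
      by (rule prod.union_disjoint) (use fin disj2 in auto)
    also have "prod f ({1..k} \<union> A2) = prod f {1..k} * prod f A2"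
      by (rule prod.union_disjoint) (use fin disj1 in auto)
    finally show ?thesis unfolding D_def A f_def by simp
  qed
  also have "\<dots> dvd (\<Prod>j\<in>{1..k}. ms!(j-1)^j) * ((\<Prod>j\<in>{r-i..r-1}. ms!(j-1)^k)
     * (\<Prod>t\<in>A2. mu (ms!(t-1)) (t-k))) * mu (ms!(r-1)) r"
  proof (intro mult_dvd_mono dvd_refl)
    show "(\<Prod>t\<in>{1..k}. mu (ms!(t-1)) t) dvd (\<Prod>j\<in>{1..k}. ms!(j-1)^j)"
    proof (rule prod_dvd_prod)
      fix t assume "t \<in> {1..k}"
      then have "ms!(t-1) dvd ms!(t-1)^t" by (simp add: dvd_power)
      then show "mu (ms!(t-1)) t dvd ms!(t-1)^t" using mu_dvd_self dvd_trans by blast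
    qed
    have "(\<Prod>t\<in>A2. mu (ms!(t-1)) t) dvd (\<Prod>t\<in>A2. ms!(t-1)^k * mu (ms!(t-1)) (t-k))"
      by (rule prod_dvd_prod) (rule mu_dvd_shift)
    also have "\<dots> = (\<Prod>t\<in>A2. ms!(t-1)^k) * (\<Prod>t\<in>A2. mu (ms!(t-1)) (t-k))"
      by (simp add: prod.distrib)
    also have "\<dots> dvd (\<Prod>j\<in>{r-i..r-1}. ms!(j-1)^k) * (\<Prod>t\<in>A2. mu (ms!(t-1)) (t-k))"
      by (intro mult_dvd_mono dvd_refl prod_dvd_prod_subset) (auto simp: A2_def)
    finally show "(\<Prod>t\<in>A2. mu (ms!(t-1)) t) dvd (\<Prod>j\<in>{r-i..r-1}. ms!(j-1)^k) * (\<Prod>t\<in>A2. mu (ms!(t-1)) (t-k))" .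
  qed
  finally show ?thesis unfolding A2_def by (simp add: mult.assoc)
qed



lemma Ccoef_nat: "Ccoef ms i = int ((\<Prod>j\<in>{1..length ms - i - 1}. ms!(j-1)^j) *
   (\<Prod>j\<in>{length ms - i..length ms - 1}. ms!(j-1)^(length ms - i - 1)))"
  by (simp add: Ccoef_def Let_def of_nat_prod)

lemma D_shift:
  fixes ms :: "nat list" and js :: "int list" and i :: nat
  defines "r \<equiv> length ms"
  defines "k \<equiv> length ms - i - 1"
  assumes i: "i < r" and J: "\<forall>j\<in>set js. int (r - i) \<le> j"
  shows "D (map (\<lambda>j. j - int (r-i) + 1) js) (take i (drop k ms))
     = (\<Prod>t\<in>{t\<in>{r-i..r-1}. int t \<notin> set js}. mu (ms!(t-1)) (t-k))"
proof -
  define ms' where "ms' = take i (drop k ms)"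
  define js' where "js' = map (\<lambda>j. j - int (r-i) + 1) js"
  have rk: "r - i = k + 1" using i by (simp add: k_def r_def)
  have len: "length ms' = i" using i by (simp add: ms'_def k_def r_def)
  define A' where "A' = {t\<in>{1..i}. int t \<notin> set js'}"
  define h where "h t = t + k" for t :: nat
  have inj: "inj_on h A'" by (simp add: h_def inj_on_def)
  have img: "h ` A' = {t\<in>{r-i..r-1}. int t \<notin> set js}"
  proof (rule set_eqI, rule iffI)
    fix x assume "x \<in> h ` A'"
    then obtain t where t: "t \<in> A'" "x = t + k" by (auto simp: h_def)
    have "int x \<notin> set js"
    proof
      assume xin: "int x \<in> set js"
      have e: "int t = int x - int (r-i) + 1" using t rk by simp
      have "int t \<in> (\<lambda>j. j - int (r-i) + 1) ` set js" using image_eqI[where f="\<lambda>j. j - int (r-i) + 1", OF e xin] by simp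
      then have "int t \<in> set js'" by (simp add: js'_def)
      then show False using t by (simp add: A'_def)
    qed
    then show "x \<in> {t\<in>{r-i..r-1}. int t \<notin> set js}" using t rk i by (auto simp: A'_def)
  next
    fix x assume x: "x \<in> {t\<in>{r-i..r-1}. int t \<notin> set js}"
    define t where "t = x - k"
    have xt: "x = t + k" using x rk by (auto simp: t_def)
    have "int t \<notin> set js'"
    proof
      assume "int t \<in> set js'"
      then obtain j where j: "j \<in> set js" "int t = j - int (r-i) + 1" by (auto simp: js'_def)
      then have "j = int x" using xt rk by simp
      then show False using j x by simp
    qed
    then have "t \<in> A'" using x xt rk i by (auto simp: A'_def)
    then show "x \<in> h ` A'" using xt by (auto simp: h_def)
  qed
  have "D js' ms' = (\<Prod>t\<in>A'. mu (ms'!(t-1)) t)" by (simp add: D_def len A'_def)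
  also have "\<dots> = (\<Prod>t\<in>A'. mu (ms!(h t - 1)) (h t - k))"
  proof (rule prod.cong)
    fix t assume t: "t \<in> A'"
    then have "t - 1 < i" "1 \<le> t" by (auto simp: A'_def)
    then have "ms'!(t-1) = ms!(h t - 1)" using i
      by (simp add: ms'_def h_def nth_take nth_drop k_def r_def algebra_simps)
    then show "mu (ms'!(t-1)) t = mu (ms!(h t - 1)) (h t - k)" by (simp add: h_def)
  qed simp
  also have "\<dots> = (\<Prod>x\<in>h ` A'. mu (ms!(x - 1)) (x - k))"
    using prod.reindex[OF inj, of "\<lambda>x. mu (ms!(x - 1)) (x - k)"] by simp
  finally show ?thesis unfolding img js'_def ms'_def by simp
qed



lemma T1:
  fixes ms :: "nat list" and js :: "int list" and i :: nat
  defines "r \<equiv> length ms"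
  defines "js' \<equiv> map (\<lambda>j. j - int (r - i) + 1) js"
  defines "ms' \<equiv> take i (drop (r-i-1) ms)"
  assumes i: "i < r" and srt: "sorted_wrt (<) js" and J: "\<forall>j\<in>set js. j \<le> int r - 1"
    and IH: "sorted_wrt (<) js' \<Longrightarrow> \<forall>j\<in>set js'. j \<le> int (length ms') \<Longrightarrow>
              int (D js' ms') dvd beta js' ms'"
  shows "int (D js ms) dvd Ccoef ms i * alpha (last ms) r i * beta js' ms'"
proof (cases "\<exists>j\<in>set js'. j \<le> 0")
  case True
  then show ?thesis by (simp add: beta_zero)
next
  case False
  define k where "k = r - i - 1"
  have J2: "\<forall>j\<in>set js. int (r - i) \<le> j \<and> j \<le> int r - 1"
  proof
    fix j assume "j \<in> set js"
    moreover have "\<not> (j - int (r-i) + 1 \<le> 0)" using False calculation by (auto simp: js'_def)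
    ultimately show "int (r - i) \<le> j \<and> j \<le> int r - 1" using J by auto
  qed
  have len: "length ms' = i" using i by (simp add: ms'_def r_def)
  have "sorted_wrt (<) js'" unfolding js'_def sorted_wrt_map
    by (rule sorted_wrt_mono_rel[OF _ srt]) simp
  moreover have "\<forall>j\<in>set js'. j \<le> int (length ms')" using J2 i len by (auto simp: js'_def)
  ultimately have IH': "int (D js' ms') dvd beta js' ms'" by (rule IH)
  have Dsh: "D js' ms' = (\<Prod>t\<in>{t\<in>{r-i..r-1}. int t \<notin> set js}. mu (ms!(t-1)) (t-k))"
    unfolding js'_def ms'_def k_def r_def
    using D_shift[of i ms js] i J2 by (simp add: r_def)
  have C: "D js ms dvd (\<Prod>j\<in>{1..k}. ms!(j-1)^j) * (\<Prod>j\<in>{r-i..r-1}. ms!(j-1)^k)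
     * D js' ms' * mu (ms!(r-1)) r"
    unfolding Dsh k_def r_def using core[of i ms js] i J2 by (simp add: r_def)
  have ne: "ms \<noteq> []" using i by (auto simp: r_def)
  have al: "int (mu (ms!(r-1)) r) dvd alpha (last ms) r i"
    using alpha_mu[of r "ms!(r-1)" i] i ne by (simp add: last_conv_nth r_def)
  have Cc: "Ccoef ms i = int ((\<Prod>j\<in>{1..k}. ms!(j-1)^j) * (\<Prod>j\<in>{r-i..r-1}. ms!(j-1)^k))"
    by (simp add: Ccoef_nat k_def r_def)
  have "int (D js ms) dvd int ((\<Prod>j\<in>{1..k}. ms!(j-1)^j) * (\<Prod>j\<in>{r-i..r-1}. ms!(j-1)^k))
     * int (D js' ms') * int (mu (ms!(r-1)) r)"
    using C by (simp only: int_dvd_int_iff of_nat_mult[symmetric])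
  also have "\<dots> dvd Ccoef ms i * beta js' ms' * alpha (last ms) r i"
    unfolding Cc by (intro mult_dvd_mono dvd_refl IH' al)
  finally show ?thesis by (simp add: algebra_simps)
qed



lemma T0:
  fixes ms :: "nat list" and js :: "int list" and i :: nat
  defines "r \<equiv> length ms"
  assumes i: "i < r" and J: "\<forall>j\<in>set js. int (r - i) \<le> j \<and> j \<le> int r - 1"
    and full: "\<forall>t\<in>{r-i..r-1}. int t \<in> set js"
  shows "int (D js ms) dvd Ccoef ms i * alpha (last ms) r i"
proof -
  define k where "k = r - i - 1"
  have e: "{t\<in>{r-i..r-1}. int t \<notin> set js} = {}" using full by auto
  have C0: "D js ms dvd (\<Prod>j\<in>{1..k}. ms!(j-1)^j) * (\<Prod>j\<in>{r-i..r-1}. ms!(j-1)^k)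
     * (\<Prod>t\<in>{t\<in>{r-i..r-1}. int t \<notin> set js}. mu (ms!(t-1)) (t-k)) * mu (ms!(r-1)) r"
    unfolding k_def r_def using core[of i ms js] i J by (simp add: r_def)
  have C: "D js ms dvd (\<Prod>j\<in>{1..k}. ms!(j-1)^j) * (\<Prod>j\<in>{r-i..r-1}. ms!(j-1)^k)
     * mu (ms!(r-1)) r"
    using C0 unfolding e by simp
  have ne: "ms \<noteq> []" using i by (auto simp: r_def)
  have al: "int (mu (ms!(r-1)) r) dvd alpha (last ms) r i"
    using alpha_mu[of r "ms!(r-1)" i] i ne by (simp add: last_conv_nth r_def)
  have Cc: "Ccoef ms i = int ((\<Prod>j\<in>{1..k}. ms!(j-1)^j) * (\<Prod>j\<in>{r-i..r-1}. ms!(j-1)^k))"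
    by (simp add: Ccoef_nat k_def r_def)
  have "int (D js ms) dvd int ((\<Prod>j\<in>{1..k}. ms!(j-1)^j) * (\<Prod>j\<in>{r-i..r-1}. ms!(j-1)^k))
      * int (mu (ms!(r-1)) r)"
    using C by (simp only: int_dvd_int_iff of_nat_mult[symmetric])
  also have "\<dots> dvd Ccoef ms i * alpha (last ms) r i"
    unfolding Cc by (intro mult_dvd_mono dvd_refl al)
  finally show ?thesis .
qed



lemma sorted_butlast_lt:
  fixes js :: "int list"
  assumes "sorted_wrt (<) js" "js \<noteq> []" "j \<in> set (butlast js)"
  shows "j < last js"
proof -
  have "sorted_wrt (<) (butlast js @ [last js])" using assms(1,2) by simp
  then show ?thesis using assms(3) by (simp add: sorted_wrt_append)
qed

lemma sorted_last_le:
  fixes js :: "int list"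
  assumes "sorted_wrt (<) js" "js \<noteq> []" "j \<in> set js"
  shows "j \<le> last js"
proof -
  have "set js = set (butlast js @ [last js])" using assms(2) by simp
  then have "j \<in> set (butlast js) \<or> j = last js" using assms(3) by auto
  then show ?thesis using sorted_butlast_lt[OF assms(1,2)] by force
qed

lemma sorted_butlast: "sorted_wrt (<) js \<Longrightarrow> sorted_wrt (<) (butlast js)"
proof (cases "js = []")
  case False
  assume "sorted_wrt (<) js"
  then have "sorted_wrt (<) (butlast js @ [last js])" using False by simp
  then show ?thesis by (simp add: sorted_wrt_append)
qed simp

lemma D_butlast:
  assumes "js \<noteq> []" "last js = int (length ms)" "ms \<noteq> []"
  shows "D js ms = D (butlast js) (butlast ms)"
proof -
  have js: "set js = insert (last js) (set (butlast js))"
  proof -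
    have "set js = set (butlast js @ [last js])" using assms(1) by simp
    then show ?thesis by simp
  qed
  have S: "{t\<in>{1..length ms}. int t \<notin> set js} = {t\<in>{1..length (butlast ms)}. int t \<notin> set (butlast js)}"
    using assms(2,3) unfolding js by auto
  show ?thesis unfolding D_def S
    by (rule prod.cong) (auto simp: nth_butlast)
qed

lemma part1:
  "sorted_wrt (<) js \<Longrightarrow> \<forall>j\<in>set js. j \<le> int (length ms) \<Longrightarrow> int (D js ms) dvd beta js ms"
proof (induction "length ms" arbitrary: js ms rule: less_induct)
  case less
  show ?case
  proof (cases "Zc js ms")
    case True
    then show ?thesis by (simp add: beta_zero)
  next
    case nz: False
    define r where "r = length ms"
    define s where "s = length js"
    have jne: "js \<noteq> []" and sr: "s < r" and pos: "\<forall>j\<in>set js. 1 \<le> j"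
      using nz by (auto simp: r_def s_def)
    have ms_ne: "ms \<noteq> []" using sr r_def by auto
    show ?thesis
    proof (cases "last js = int r")
      case True
      show ?thesis
      proof (cases "s = 1")
        case True
        then show ?thesis using beta_last[OF nz] \<open>last js = int r\<close> by (simp add: r_def s_def)
      next
        case False
        have b: "beta js ms = beta (butlast js) (butlast ms)"
          using beta_last[OF nz] \<open>last js = int r\<close> False by (simp add: r_def s_def)
        have "int (D (butlast js) (butlast ms)) dvd beta (butlast js) (butlast ms)"
        proof (rule less.hyps)
          show "length (butlast ms) < length ms" using ms_ne by simp
          show "sorted_wrt (<) (butlast js)" using less.prems(1) by (rule sorted_butlast)
          show "\<forall>j\<in>set (butlast js). j \<le> int (length (butlast ms))"
          proof
            fix j assume "j \<in> set (butlast js)"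
            then have "j < last js" by (rule sorted_butlast_lt[OF less.prems(1) jne])
            moreover have "int (length (butlast ms)) = int r - 1" using ms_ne by (cases ms) (auto simp: r_def)
            ultimately show "j \<le> int (length (butlast ms))" using True by simp
          qed
        qed
        then show ?thesis using D_butlast[OF jne] True ms_ne b by (simp add: r_def)
      qed
    next
      case False
      have Jr: "\<forall>j\<in>set js. j \<le> int r - 1"
      proof
        fix j assume j: "j \<in> set js"
        have "j \<le> last js" by (rule sorted_last_le[OF less.prems(1) jne j])
        moreover have "last js \<le> int r" using less.prems(2) jne by (simp add: r_def)
        ultimately show "j \<le> int r - 1" using False by simp
      qed
      have trm: "int (D js ms) dvd Ccoef ms i * alpha (last ms) r i *
            beta (map (\<lambda>j. j - int (r - i) + 1) js) (take i (drop (r-i-1) ms))"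
        if i: "i \<in> {s+1..r-1}" for i
        unfolding r_def
      proof (rule T1)
        show "i < length ms" using i sr unfolding r_def by auto
        show "sorted_wrt (<) js" by (rule less.prems(1))
        show "\<forall>j\<in>set js. j \<le> int (length ms) - 1" using Jr by (simp add: r_def)
        show "int (D (map (\<lambda>j. j - int (length ms - i) + 1) js) (take i (drop (length ms - i - 1) ms)))
          dvd beta (map (\<lambda>j. j - int (length ms - i) + 1) js) (take i (drop (length ms - i - 1) ms))"
          if "sorted_wrt (<) (map (\<lambda>j. j - int (length ms - i) + 1) js)"
             "\<forall>j\<in>set (map (\<lambda>j. j - int (length ms - i) + 1) js). j \<le> int (length (take i (drop (length ms - i - 1) ms)))"
        proof -
          have il: "i < length ms" using i sr unfolding r_def by auto
          have "length (take i (drop (length ms - i - 1) ms)) < length ms" using il by simp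
          from less.hyps[OF this that] show ?thesis .
        qed
      qed
      show ?thesis
      proof (cases "js = map (\<lambda>k. int (r - s + k)) [0..<s]")
        case top: True
        have b: "beta js ms = - (Ccoef ms s * alpha (last ms) r s +
          (\<Sum>i\<in>{s+1..r-1}. Ccoef ms i * alpha (last ms) r i *
              beta (map (\<lambda>k. int (i - s + 1 + k)) [0..<s]) (take i (drop (r-i-1) ms))))"
        proof -
          have top': "js = map (\<lambda>k. int (length ms - length js + k)) [0..<length js]"
            using top[unfolded r_def s_def] .
          have F': "last js \<noteq> int (length ms)" using False by (simp add: r_def)
          show ?thesis unfolding r_def s_def by (rule beta_top[OF nz F' top'])
        qed
        have mapeq: "map (\<lambda>k. int (i - s + 1 + k)) [0..<s] = map (\<lambda>j. j - int (r - i) + 1) js"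
          if i: "i \<in> {s+1..r-1}" for i
        proof -
          have "map (\<lambda>j. j - int (r - i) + 1) js = map (\<lambda>k. int (r - s + k) - int (r - i) + 1) [0..<s]"
            by (subst top) simp
          also have "\<dots> = map (\<lambda>k. int (i - s + 1 + k)) [0..<s]"
            using i sr by (intro map_cong) auto
          finally show ?thesis by simp
        qed
        have X: "int (D js ms) dvd Ccoef ms s * alpha (last ms) r s"
          unfolding r_def
        proof (rule T0)
          show "s < length ms" using sr by (simp add: r_def)
          show "\<forall>j\<in>set js. int (length ms - s) \<le> j \<and> j \<le> int (length ms) - 1"
            using sr by (subst top) (auto simp: r_def)
          show "\<forall>t\<in>{length ms - s..length ms - 1}. int t \<in> set js"
          proof
            fix t assume t: "t \<in> {length ms - s..length ms - 1}"
            have "t - (r - s) < s" "t = r - s + (t - (r - s))" using t sr by (auto simp: r_def)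
            then have "int t \<in> set (map (\<lambda>k. int (r - s + k)) [0..<s])"
              by (metis atLeastLessThan_iff imageI le0 set_map set_upt)
            then show "int t \<in> set js" using top by simp
          qed
        qed
        have "int (D js ms) dvd (Ccoef ms s * alpha (last ms) r s +
          (\<Sum>i\<in>{s+1..r-1}. Ccoef ms i * alpha (last ms) r i *
              beta (map (\<lambda>k. int (i - s + 1 + k)) [0..<s]) (take i (drop (r-i-1) ms))))"
          using X trm mapeq by (intro dvd_add dvd_sum) auto
        then show ?thesis unfolding b by (rule dvd_minus_iff[THEN iffD2])
      next
        case mid: False
        have b: "beta js ms = - (\<Sum>i\<in>{s+1..r-1}. Ccoef ms i * alpha (last ms) r i *
              beta (map (\<lambda>j. j - int (r - i) + 1) js) (take i (drop (r-i-1) ms)))"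
          using beta_mid[OF nz] False mid by (simp add: r_def s_def)
        show ?thesis unfolding b using trm by (intro dvd_minus_iff[THEN iffD2] dvd_sum) auto
      qed
    qed
  qed
qed



lemma C2_dvd:
  assumes const: "\<forall>x\<in>set ms. x = m" and i: "i < length ms"
  shows "int m ^ ((length ms - i - 1) * i) dvd Ccoef ms i"
proof -
  define r where "r = length ms"
  define k where "k = r - i - 1"
  have "(\<Prod>j\<in>{r-i..r-1}. ms!(j-1)^k) = (\<Prod>j\<in>{r-i..r-1}. m^k)"
  proof (rule prod.cong)
    fix j assume "j \<in> {r-i..r-1}"
    then have "j - 1 < length ms" using i by (auto simp: r_def)
    then have "ms!(j-1) = m" using const by (simp add: nth_mem)
    then show "ms!(j-1)^k = m^k" by simp
  qed simp
  also have "\<dots> = m ^ (k * i)"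
  proof -
    have "card {r-i..r-1} = i" using i by (simp add: r_def)
    then show ?thesis by (simp add: power_mult[symmetric] mult.commute)
  qed
  finally have "m ^ (k*i) dvd (\<Prod>j\<in>{1..k}. ms!(j-1)^j) * (\<Prod>j\<in>{r-i..r-1}. ms!(j-1)^k)"
    by simp
  then have "int (m ^ (k*i)) dvd int ((\<Prod>j\<in>{1..k}. ms!(j-1)^j) * (\<Prod>j\<in>{r-i..r-1}. ms!(j-1)^k))"
    by (simp only: int_dvd_int_iff)
  then show ?thesis unfolding Ccoef_nat r_def[symmetric] k_def[symmetric] by simp
qed

lemma C1_dvd:
  assumes const: "\<forall>x\<in>set ms. x = m" and i: "i < length ms" and k: "1 \<le> length ms - i - 1"
  shows "int m ^ (length ms - i - 1) dvd Ccoef ms i"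
proof -
  define r where "r = length ms"
  define k where "k = r - i - 1"
  have "ms!(k-1) = m" using const i k by (simp add: nth_mem k_def r_def)
  then have "m ^ k dvd (\<Prod>j\<in>{1..k}. ms!(j-1)^j)"
    using dvd_prodI[of "{1..k}" k "\<lambda>j. ms!(j-1)^j"] k by (simp add: k_def r_def)
  then have "m ^ k dvd (\<Prod>j\<in>{1..k}. ms!(j-1)^j) * (\<Prod>j\<in>{r-i..r-1}. ms!(j-1)^k)"
    by (rule dvd_mult2)
  then have "int (m ^ k) dvd int ((\<Prod>j\<in>{1..k}. ms!(j-1)^j) * (\<Prod>j\<in>{r-i..r-1}. ms!(j-1)^k))"
    by (simp only: int_dvd_int_iff)
  then show ?thesis unfolding Ccoef_nat r_def[symmetric] k_def[symmetric] by simp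
qed

lemma T2:
  fixes ms :: "nat list" and m s i :: nat and b :: int
  defines "r \<equiv> length ms"
  assumes const: "\<forall>x\<in>set ms. x = m" and i: "s + 1 \<le> i" "i \<le> r - 1" and s1: "1 \<le> s"
    and IH: "int (m ^ (i - s) div gcd m 2) dvd b"
  shows "int (m ^ (r - s) div gcd m 2) dvd Ccoef ms i * alpha (last ms) r i * b"
proof -
  define g where "g = gcd m 2"
  have ir: "i < r" using i by auto
  have "ms \<noteq> []" using ir by (auto simp: r_def)
  then have "last ms \<in> set ms" by simp
  then have lm: "last ms = m" using const by blast
  have gd: "g dvd m ^ (i - s)" unfolding g_def using i by (intro dvd_trans[OF gcd_dvd1 dvd_power]) auto
  have e: "m ^ (r - s) div g = m ^ (r - i) * (m ^ (i - s) div g)"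
  proof -
    have "m ^ (r - s) = m ^ (r - i) * m ^ (i - s)" using i ir by (simp add: power_add[symmetric])
    then show ?thesis using div_mult_swap[OF gd, of "m ^ (r - i)"] by simp
  qed
  have A: "int m ^ (r - i) dvd Ccoef ms i * alpha m r i"
  proof (cases "i = r - 1")
    case True
    then have "r - i = 1" "3 \<le> r" using i ir s1 by auto
    then show ?thesis using alpha_sub_dvd[of r m] True by simp
  next
    case False
    have i2: "2 \<le> i" "2 \<le> r - i" using i ir False s1 by auto
    then have "(r - i - 1) * 2 \<le> (r - i - 1) * i" by (intro mult_le_mono2)
    then have "r - i \<le> (r - i - 1) * i" using i2 by linarith
    then have "int m ^ (r - i) dvd int m ^ ((r - i - 1) * i)" by (rule le_imp_power_dvd)
    also have "\<dots> dvd Ccoef ms i" using C2_dvd[OF const, of i] ir by (simp add: r_def)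
    finally show ?thesis by simp
  qed
  have "int (m ^ (r - s) div g) = int m ^ (r - i) * int (m ^ (i - s) div g)" using e by simp
  also have "\<dots> dvd (Ccoef ms i * alpha m r i) * b"
    using A IH by (intro mult_dvd_mono) (simp_all add: g_def)
  finally show ?thesis by (simp add: g_def lm)
qed

lemma C_both:
  assumes const: "\<forall>x\<in>set ms. x = m" and i: "i < length ms" and k: "1 \<le> length ms - i - 1"
  shows "int m ^ ((length ms - i - 1) + (length ms - i - 1) * i) dvd Ccoef ms i"
proof -
  define r where "r = length ms"
  define k where "k = r - i - 1"
  have "ms!(k-1) = m" using const i k by (simp add: nth_mem k_def r_def)
  then have d1: "m ^ k dvd (\<Prod>j\<in>{1..k}. ms!(j-1)^j)"
    using dvd_prodI[of "{1..k}" k "\<lambda>j. ms!(j-1)^j"] k by (simp add: k_def r_def)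
  have "(\<Prod>j\<in>{r-i..r-1}. ms!(j-1)^k) = (\<Prod>j\<in>{r-i..r-1}. m^k)"
  proof (rule prod.cong)
    fix j assume "j \<in> {r-i..r-1}"
    then have "j - 1 < length ms" using i by (auto simp: r_def)
    then have "ms!(j-1) = m" using const by (simp add: nth_mem)
    then show "ms!(j-1)^k = m^k" by simp
  qed simp
  also have "\<dots> = m ^ (k * i)"
  proof -
    have "card {r-i..r-1} = i" using i by (simp add: r_def)
    then show ?thesis by (simp add: power_mult[symmetric] mult.commute)
  qed
  finally have d2: "m ^ (k * i) dvd (\<Prod>j\<in>{r-i..r-1}. ms!(j-1)^k)" by simp
  have "m ^ (k + k * i) dvd (\<Prod>j\<in>{1..k}. ms!(j-1)^j) * (\<Prod>j\<in>{r-i..r-1}. ms!(j-1)^k)"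
    unfolding power_add by (rule mult_dvd_mono[OF d1 d2])
  then have "int (m ^ (k + k * i)) dvd int ((\<Prod>j\<in>{1..k}. ms!(j-1)^j) * (\<Prod>j\<in>{r-i..r-1}. ms!(j-1)^k))"
    by (simp only: int_dvd_int_iff)
  then show ?thesis unfolding Ccoef_nat r_def[symmetric] k_def[symmetric] by simp
qed

lemma T3:
  fixes ms :: "nat list" and m s :: nat
  defines "r \<equiv> length ms"
  assumes const: "\<forall>x\<in>set ms. x = m" and s1: "1 \<le> s" and sr: "s < r"
  shows "int (m ^ (r - s) div gcd m 2) dvd Ccoef ms s * alpha (last ms) r s"
proof -
  define g where "g = gcd m 2"
  have "ms \<noteq> []" using sr by (auto simp: r_def)
  then have "last ms \<in> set ms" by simp
  then have lm: "last ms = m" using const by blast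
  have gdm: "g dvd m" by (simp add: g_def)
  show ?thesis
  proof (cases "r - s = 1")
    case True
    have C1: "Ccoef ms s = 1" using True by (simp add: Ccoef_def Let_def r_def)
    have sr1: "s = r - 1" using True sr by auto
    have "int (m div g) dvd alpha m r s"
    proof (cases "r = 2")
      case True
      then have "s = 1" using sr1 by simp
      then show ?thesis using alpha_21[of m] True by (simp add: g_def)
    next
      case False
      then have "3 \<le> r" using sr s1 by auto
      then have "int m dvd alpha m r s" using alpha_sub_dvd[of r m] sr1 by simp
      moreover have "int (m div g) dvd int m"
      proof -
        have "m = (m div g) * g" using gdm by simp
        then have "m div g dvd m" by (metis dvd_triv_left)
        then show ?thesis by (simp only: int_dvd_int_iff)
      qed
      ultimately show ?thesis using dvd_trans by blast
    qed
    then show ?thesis using True C1 lm by (simp add: g_def)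
  next
    case False
    define k where "k = r - s - 1"
    have k1: "1 \<le> k" using False sr by (simp add: k_def)
    have le: "r - s \<le> k + k * s"
    proof -
      have "r - s = k + 1" using k1 by (simp add: k_def)
      moreover have "1 \<le> k * s" using k1 s1 by simp
      ultimately show ?thesis by linarith
    qed
    have "int (m ^ (r - s) div g) dvd int (m ^ (r - s))"
    proof -
      have "g dvd m ^ (r - s)" using sr by (intro dvd_trans[OF gdm dvd_power]) auto
      then have "m ^ (r - s) = (m ^ (r - s) div g) * g" by simp
      then have "m ^ (r - s) div g dvd m ^ (r - s)" by (metis dvd_triv_left)
      then show ?thesis by (simp only: int_dvd_int_iff)
    qed
    also have "\<dots> dvd int m ^ (k + k * s)" using le by (simp add: le_imp_power_dvd)
    also have "\<dots> dvd Ccoef ms s" using C_both[OF const, of s] sr k1 by (simp add: k_def r_def)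
    finally show ?thesis by (simp add: g_def)
  qed
qed



lemma part2:
  "sorted_wrt (<) js \<Longrightarrow> \<forall>j\<in>set js. j \<le> int (length ms) \<Longrightarrow> \<forall>x\<in>set ms. x = m \<Longrightarrow>
   int (m ^ (length ms - length js) div gcd m 2) dvd beta js ms"
proof (induction "length ms" arbitrary: js ms rule: less_induct)
  case less
  show ?case
  proof (cases "Zc js ms")
    case True
    then show ?thesis by (simp add: beta_zero)
  next
    case nz: False
    define r where "r = length ms"
    define s where "s = length js"
    have jne: "js \<noteq> []" and sr: "s < r"
      using nz by (auto simp: r_def s_def)
    then have s1: "1 \<le> s" by (simp add: s_def Suc_le_eq)
    have ms_ne: "ms \<noteq> []" using sr r_def by auto
    show ?thesis
    proof (cases "last js = int r")
      case True
      show ?thesis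
      proof (cases "s = 1")
        case True
        then show ?thesis using beta_last[OF nz] \<open>last js = int r\<close> by (simp add: r_def s_def)
      next
        case False
        have lj: "last js = int (length ms)" using True by (simp add: r_def)
        have nl: "length js \<noteq> 1" using False by (simp add: s_def)
        have b: "beta js ms = beta (butlast js) (butlast ms)"
          using beta_last[OF nz lj] nl by simp
        have dv: "int (m ^ (length (butlast ms) - length (butlast js)) div gcd m 2) dvd beta (butlast js) (butlast ms)"
        proof (rule less.hyps)
          show "length (butlast ms) < length ms" using ms_ne by simp
          show "sorted_wrt (<) (butlast js)" using less.prems(1) by (rule sorted_butlast)
          show "\<forall>j\<in>set (butlast js). j \<le> int (length (butlast ms))"
          proof
            fix j assume "j \<in> set (butlast js)"
            then have "j < last js" by (rule sorted_butlast_lt[OF less.prems(1) jne])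
            moreover have "int (length (butlast ms)) = int r - 1" using ms_ne by (cases ms) (auto simp: r_def)
            ultimately show "j \<le> int (length (butlast ms))" using True by simp
          qed
          show "\<forall>x\<in>set (butlast ms). x = m" proof
            fix x assume "x \<in> set (butlast ms)"
            then have "x \<in> set ms" by (rule in_set_butlastD)
            then show "x = m" using less.prems(3) by simp
          qed
        qed
        have eq: "length (butlast ms) - length (butlast js) = length ms - length js"
        proof -
          have l1: "length (butlast ms) = r - 1" by (simp add: r_def)
          have l2: "length (butlast js) = s - 1" by (simp add: s_def)
          have l3: "length ms - length js = r - s" by (simp add: r_def s_def)
          obtain s' where "s = Suc s'" using s1 by (cases s) auto
          then show ?thesis unfolding l1 l2 l3 by simp
        qed
        show ?thesis unfolding b using dv[unfolded eq] .
      qed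
    next
      case False
      have Jr: "\<forall>j\<in>set js. j \<le> int r - 1"
      proof
        fix j assume j: "j \<in> set js"
        have "j \<le> last js" by (rule sorted_last_le[OF less.prems(1) jne j])
        moreover have "last js \<le> int r" using less.prems(2) jne by (simp add: r_def)
        ultimately show "j \<le> int r - 1" using False by simp
      qed
      have trm: "int (m ^ (r - s) div gcd m 2) dvd Ccoef ms i * alpha (last ms) r i *
            beta (map (\<lambda>j. j - int (r - i) + 1) js) (take i (drop (r-i-1) ms))"
        if i: "i \<in> {s+1..r-1}" for i
        unfolding r_def
      proof (rule T2[OF less.prems(3)])
        show "s + 1 \<le> i" "i \<le> length ms - 1" using i by (auto simp: r_def)
        show "1 \<le> s" by (rule s1)
        have il: "i < length ms" using i sr unfolding r_def by auto
        define js' where "js' = map (\<lambda>j. j - int (length ms - i) + 1) js"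
        define ms' where "ms' = take i (drop (length ms - i - 1) ms)"
        have lm': "length ms' = i" using il by (simp add: ms'_def)
        have dv: "int (m ^ (length ms' - length js') div gcd m 2) dvd beta js' ms'"
        proof (rule less.hyps)
          show "length ms' < length ms" using lm' il by simp
          show "sorted_wrt (<) js'" unfolding js'_def sorted_wrt_map
            by (rule sorted_wrt_mono_rel[OF _ less.prems(1)]) simp
          show "\<forall>j\<in>set js'. j \<le> int (length ms')" using Jr il lm' by (auto simp: js'_def r_def)
          show "\<forall>x\<in>set ms'. x = m" using less.prems(3) unfolding ms'_def
            by (meson in_set_dropD in_set_takeD)
        qed
        have ljs: "length js' = s" by (simp add: js'_def s_def)
        have eq': "length ms' - length js' = i - s" unfolding lm' ljs by (rule refl)
        show "int (m ^ (i - s) div gcd m 2) dvd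
          beta (map (\<lambda>j. j - int (length ms - i) + 1) js) (take i (drop (length ms - i - 1) ms))"
          using dv[unfolded eq'] unfolding js'_def ms'_def .
      qed
      have goal_eq: "length ms - length js = r - s" by (simp add: r_def s_def)
      show ?thesis
      proof (cases "js = map (\<lambda>k. int (r - s + k)) [0..<s]")
        case top: True
        have b: "beta js ms = - (Ccoef ms s * alpha (last ms) r s +
          (\<Sum>i\<in>{s+1..r-1}. Ccoef ms i * alpha (last ms) r i *
              beta (map (\<lambda>k. int (i - s + 1 + k)) [0..<s]) (take i (drop (r-i-1) ms))))"
        proof -
          have top': "js = map (\<lambda>k. int (length ms - length js + k)) [0..<length js]"
            using top[unfolded r_def s_def] .
          have F': "last js \<noteq> int (length ms)" using False by (simp add: r_def)
          show ?thesis unfolding r_def s_def by (rule beta_top[OF nz F' top'])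
        qed
        have mapeq: "map (\<lambda>k. int (i - s + 1 + k)) [0..<s] = map (\<lambda>j. j - int (r - i) + 1) js"
          if i: "i \<in> {s+1..r-1}" for i
        proof -
          have "map (\<lambda>j. j - int (r - i) + 1) js = map (\<lambda>k. int (r - s + k) - int (r - i) + 1) [0..<s]"
            by (subst top) simp
          also have "\<dots> = map (\<lambda>k. int (i - s + 1 + k)) [0..<s]"
          proof (rule map_cong[OF refl])
            fix k
            have "s \<le> r" "i \<le> r" "s \<le> i" using i sr by auto
            then show "int (r - s + k) - int (r - i) + 1 = int (i - s + 1 + k)"
              by (simp add: of_nat_diff)
          qed
          finally show ?thesis by simp
        qed
        have X: "int (m ^ (r - s) div gcd m 2) dvd Ccoef ms s * alpha (last ms) r s"
          unfolding r_def by (rule T3[OF less.prems(3) s1]) (use sr in \<open>simp add: r_def\<close>)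
        have "int (m ^ (r - s) div gcd m 2) dvd (Ccoef ms s * alpha (last ms) r s +
          (\<Sum>i\<in>{s+1..r-1}. Ccoef ms i * alpha (last ms) r i *
              beta (map (\<lambda>k. int (i - s + 1 + k)) [0..<s]) (take i (drop (r-i-1) ms))))"
        proof (rule dvd_add[OF X dvd_sum])
          fix i assume i: "i \<in> {s+1..r-1}"
          show "int (m ^ (r - s) div gcd m 2) dvd Ccoef ms i * alpha (last ms) r i *
              beta (map (\<lambda>k. int (i - s + 1 + k)) [0..<s]) (take i (drop (r-i-1) ms))"
            unfolding mapeq[OF i] by (rule trm[OF i])
        qed
        then have "int (m ^ (r - s) div gcd m 2) dvd - (Ccoef ms s * alpha (last ms) r s +
          (\<Sum>i\<in>{s+1..r-1}. Ccoef ms i * alpha (last ms) r i *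
              beta (map (\<lambda>k. int (i - s + 1 + k)) [0..<s]) (take i (drop (r-i-1) ms))))"
          by (simp only: dvd_minus_iff)
        then have "int (m ^ (r - s) div gcd m 2) dvd beta js ms" by (simp only: b)
        then show ?thesis by (simp only: goal_eq)
      next
        case mid: False
        have b: "beta js ms = - (\<Sum>i\<in>{s+1..r-1}. Ccoef ms i * alpha (last ms) r i *
              beta (map (\<lambda>j. j - int (r - i) + 1) js) (take i (drop (r-i-1) ms)))"
        proof -
          have mid': "js \<noteq> map (\<lambda>k. int (length ms - length js + k)) [0..<length js]"
            using mid[unfolded r_def s_def] .
          have F': "last js \<noteq> int (length ms)" using False by (simp add: r_def)
          show ?thesis unfolding r_def s_def by (rule beta_mid[OF nz F' mid'])
        qed
        show ?thesis unfolding b goal_eq dvd_minus_iff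
        proof (rule dvd_sum)
          fix i assume i: "i \<in> {s+1..r-1}"
          show "int (m ^ (r - s) div gcd m 2) dvd Ccoef ms i * alpha (last ms) r i *
              beta (map (\<lambda>j. j - int (r - i) + 1) js) (take i (drop (r-i-1) ms))"
            by (rule trm[OF i])
        qed
      qed
    qed
  qed
qed


theorem lemma2p7:
  fixes ms :: "nat list" and js :: "int list"
  assumes "length ms \<ge> 2"
    and "\<forall>m\<in>set ms. m \<ge> 2"
    and "1 \<le> length js" and "length js \<le> length ms - 1"
    and "sorted_wrt (<) js"
    and "\<forall>j\<in>set js. 1 \<le> j \<and> j \<le> int (length ms)"
  shows "int (\<Prod>t\<in>{t\<in>{1..length ms}. int t \<notin> set js}. mu (ms!(t-1)) t) dvd beta js ms
     \<and> (\<forall>m. (\<forall>x\<in>set ms. x = m) \<longrightarrow>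
            int (m ^ (length ms - length js) div gcd m 2) dvd beta js ms)"
proof
  have b: "\<forall>j\<in>set js. j \<le> int (length ms)" using assms(6) by blast
  show "int (\<Prod>t\<in>{t\<in>{1..length ms}. int t \<notin> set js}. mu (ms!(t-1)) t) dvd beta js ms"
    using part1[OF assms(5) b] by (simp only: D_def)
  show "\<forall>m. (\<forall>x\<in>set ms. x = m) \<longrightarrow>
            int (m ^ (length ms - length js) div gcd m 2) dvd beta js ms"
    using part2[OF assms(5) b] by blast
qed

end
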